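(* Let $n\ge2$ and let $a,b\in H_n\rtimes S_n$ satisfy $\sigma_a=\sigma_b$. If there exists $x\in H_n$ with $x^{-1}ax=b$, then $t_{[i]}(a)=t_{[i]}(b)$ for every class $[i]_a$.
   Context: $\mathbb{N}=\{1,2,\dots\}$, $X_n=\{1,\dots,n\}\times\mathbb{N}$, permutations act on the right. $H_n$ is the group of bijections $g$ of $X_n$ with $z_i(g)\in\mathbb{N}$, $t_i(g)\in\mathbb{Z}$ such that $(i,m)g=(i,m+t_i(g))$ for all $m\ge z_i(g)$. $S_n$ acts by $(i,m)\sigma=(i\sigma,m)$, and $H_n\rtimes S_n\le\mathrm{Sym}(X_n)$ is generated by $H_n$ and these; each $g\in H_n\rtimes S_n$ is uniquely $g=\omega_g\sigma_g$ with $\omega_g\in H_n$, $\sigma_g\in S_n$, and $t_i(g):=t_i(\omega_g)$. The class $[i]_g$ is the orbit of $i\in\{1,\dots,n\}$ under $\langle\sigma_g\rangle$, and $t_{[i]}(g)=\sum_{k\in[i]_g}t_k(g)$ (since $\sigma_a=\sigma_b$, the classes of $a$ and $b$ coincide). *)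

theory Defs
  imports "HOL-Combinatorics.Permutations"
begin

text \<open>Permutations act on the right, so the product g h (first g, then h)
  corresponds to the function composition h \<circ> g.\<close>

definition Xn :: "nat \<Rightarrow> (nat \<times> nat) set" where
  "Xn n = {1..n} \<times> {1..}"

definition is_bij_Xn :: "nat \<Rightarrow> (nat \<times> nat \<Rightarrow> nat \<times> nat) \<Rightarrow> bool" where
  "is_bij_Xn n g \<longleftrightarrow> bij_betw g (Xn n) (Xn n) \<and> (\<forall>p. p \<notin> Xn n \<longrightarrow> g p = p)"

definition Hn :: "nat \<Rightarrow> (nat \<times> nat \<Rightarrow> nat \<times> nat) set" where
  "Hn n = {g. is_bij_Xn n g \<and>
     (\<forall>i\<in>{1..n}. \<exists>z::nat. \<exists>t::int. z \<ge> 1 \<and>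
        (\<forall>m\<ge>z. fst (g (i, m)) = i \<and> int (snd (g (i, m))) = int m + t))}"

definition tH :: "nat \<Rightarrow> (nat \<times> nat \<Rightarrow> nat \<times> nat) \<Rightarrow> int" where
  "tH i g = (THE t. \<exists>z::nat. \<forall>m\<ge>z. fst (g (i, m)) = i \<and> int (snd (g (i, m))) = int m + t)"

definition sact :: "nat \<Rightarrow> (nat \<Rightarrow> nat) \<Rightarrow> nat \<times> nat \<Rightarrow> nat \<times> nat" where
  "sact n \<sigma> p = (if p \<in> Xn n then (\<sigma> (fst p), snd p) else p)"

definition HSn :: "nat \<Rightarrow> (nat \<times> nat \<Rightarrow> nat \<times> nat) set" where
  "HSn n = {g. \<exists>\<omega> \<sigma>. \<omega> \<in> Hn n \<and> \<sigma> permutes {1..n} \<and> g = sact n \<sigma> \<circ> \<omega>}"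

definition sigma_of :: "nat \<Rightarrow> (nat \<times> nat \<Rightarrow> nat \<times> nat) \<Rightarrow> (nat \<Rightarrow> nat)" where
  "sigma_of n g = (THE \<sigma>. \<sigma> permutes {1..n} \<and> (\<exists>\<omega>\<in>Hn n. g = sact n \<sigma> \<circ> \<omega>))"

definition omega_of :: "nat \<Rightarrow> (nat \<times> nat \<Rightarrow> nat \<times> nat) \<Rightarrow> (nat \<times> nat \<Rightarrow> nat \<times> nat)" where
  "omega_of n g = (THE \<omega>. \<omega> \<in> Hn n \<and> (\<exists>\<sigma>. \<sigma> permutes {1..n} \<and> g = sact n \<sigma> \<circ> \<omega>))"

definition tHS :: "nat \<Rightarrow> nat \<Rightarrow> (nat \<times> nat \<Rightarrow> nat \<times> nat) \<Rightarrow> int" where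
  "tHS n i g = tH i (omega_of n g)"

definition cls :: "nat \<Rightarrow> (nat \<times> nat \<Rightarrow> nat \<times> nat) \<Rightarrow> nat \<Rightarrow> nat set" where
  "cls n g i = {(sigma_of n g ^^ k) i | k. True}"

definition tcls :: "nat \<Rightarrow> (nat \<times> nat \<Rightarrow> nat \<times> nat) \<Rightarrow> nat \<Rightarrow> int" where
  "tcls n g i = (\<Sum>k\<in>cls n g i. tHS n k g)"

end

theory Submission
  imports Defs
begin

lemma tH_prop:
  assumes "w \<in> Hn n" "i \<in> {1..n}"
  shows "\<exists>z\<ge>1. \<forall>m\<ge>z. fst (w (i,m)) = i \<and> int (snd (w (i,m))) = int m + tH i w"
proof -
  from assms obtain z t where z: "z \<ge> 1"
    "\<forall>m\<ge>z. fst (w (i,m)) = i \<and> int (snd (w (i,m))) = int m + t"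
    unfolding Hn_def by blast
  have "tH i w = t" unfolding tH_def
  proof (rule the_equality)
    show "\<exists>z. \<forall>m\<ge>z. fst (w (i,m)) = i \<and> int (snd (w (i,m))) = int m + t" using z by blast
  next
    fix t' assume "\<exists>z. \<forall>m\<ge>z. fst (w (i,m)) = i \<and> int (snd (w (i,m))) = int m + t'"
    then obtain z' where z': "\<forall>m\<ge>z'. fst (w (i,m)) = i \<and> int (snd (w (i,m))) = int m + t'" by blast
    have "int (snd (w (i,max z z'))) = int (max z z') + t'" using z' by auto
    moreover have "int (snd (w (i,max z z'))) = int (max z z') + t" using z by auto
    ultimately show "t' = t" by simp
  qed
  thus ?thesis using z by auto
qed

lemma Hn_maps:
  assumes "w \<in> Hn n" "p \<in> Xn n" shows "w p \<in> Xn n"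
  using assms unfolding Hn_def is_bij_Xn_def by (auto dest: bij_betw_apply)

lemma Hn_inj: assumes "w \<in> Hn n" shows "inj w"
proof -
  have b: "bij_betw w (Xn n) (Xn n)" and o: "\<forall>p. p \<notin> Xn n \<longrightarrow> w p = p"
    using assms unfolding Hn_def is_bij_Xn_def by auto
  show ?thesis unfolding inj_def
  proof (intro allI impI)
    fix p q assume e: "w p = w q"
    show "p = q"
    proof (cases "p \<in> Xn n"; cases "q \<in> Xn n")
      assume "p \<in> Xn n" "q \<in> Xn n" thus ?thesis using e b by (metis bij_betw_imp_inj_on inj_onD)
    next
      assume "p \<in> Xn n" "q \<notin> Xn n" thus ?thesis using e b o by (metis bij_betw_apply)
    next
      assume "p \<notin> Xn n" "q \<in> Xn n" thus ?thesis using e b o by (metis bij_betw_apply)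
    next
      assume "p \<notin> Xn n" "q \<notin> Xn n" thus ?thesis using e o by metis
    qed
  qed
qed

lemma sact_inj:
  assumes "s permutes {1..n}" shows "inj (sact n s)"
  unfolding inj_def
proof (intro allI impI)
  fix p q assume e: "sact n s p = sact n s q"
  have inj: "inj s" using permutes_inj[OF assms] .
  have img: "\<And>j. j \<in> {1..n} \<Longrightarrow> s j \<in> {1..n}" using permutes_in_image[OF assms] by presburger
  show "p = q"
  proof (cases "p \<in> Xn n"; cases "q \<in> Xn n")
    assume pq: "p \<in> Xn n" "q \<in> Xn n"
    hence "(s (fst p), snd p) = (s (fst q), snd q)" using e by (simp add: sact_def)
    hence "s (fst p) = s (fst q)" "snd p = snd q" by simp_all
    hence "fst p = fst q" "snd p = snd q" using inj by (simp_all add: inj_eq)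
    thus ?thesis by (simp add: prod_eq_iff)
  next
    assume a: "p \<in> Xn n" "q \<notin> Xn n"
    hence "q = (s (fst p), snd p)" using e by (simp add: sact_def)
    moreover have "s (fst p) \<in> {1..n}" using a img by (auto simp: Xn_def mem_Times_iff)
    moreover have "snd p \<ge> 1" using a by (auto simp: Xn_def mem_Times_iff)
    ultimately have "q \<in> Xn n" by (simp add: Xn_def)
    thus ?thesis using a by simp
  next
    assume a: "p \<notin> Xn n" "q \<in> Xn n"
    hence "p = (s (fst q), snd q)" using e by (simp add: sact_def)
    moreover have "s (fst q) \<in> {1..n}" using a img by (auto simp: Xn_def mem_Times_iff)
    moreover have "snd q \<ge> 1" using a by (auto simp: Xn_def mem_Times_iff)
    ultimately have "p \<in> Xn n" by (simp add: Xn_def)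
    thus ?thesis using a by simp
  next
    assume "p \<notin> Xn n" "q \<notin> Xn n" thus ?thesis using e by (simp add: sact_def)
  qed
qed

lemma decomp_unique:
  assumes "w1 \<in> Hn n" "w2 \<in> Hn n" "s1 permutes {1..n}" "s2 permutes {1..n}"
    "sact n s1 \<circ> w1 = sact n s2 \<circ> w2"
  shows "s1 = s2 \<and> w1 = w2"
proof -
  have "s1 = s2"
  proof
    fix i
    show "s1 i = s2 i"
    proof (cases "i \<in> {1..n}")
      case True
      obtain z1 where z1: "z1 \<ge> 1" "\<forall>m\<ge>z1. fst (w1 (i,m)) = i \<and> int (snd (w1 (i,m))) = int m + tH i w1"
        using tH_prop[OF assms(1) True] by blast
      obtain z2 where z2: "z2 \<ge> 1" "\<forall>m\<ge>z2. fst (w2 (i,m)) = i \<and> int (snd (w2 (i,m))) = int m + tH i w2"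
        using tH_prop[OF assms(2) True] by blast
      define m where "m = max z1 z2"
      have p: "(i,m) \<in> Xn n" using True z1 by (auto simp: Xn_def m_def)
      have x1: "w1 (i,m) \<in> Xn n" using Hn_maps[OF assms(1) p] .
      have x2: "w2 (i,m) \<in> Xn n" using Hn_maps[OF assms(2) p] .
      have f1: "fst (w1 (i,m)) = i" using z1 by (auto simp: m_def)
      have f2: "fst (w2 (i,m)) = i" using z2 by (auto simp: m_def)
      have "sact n s1 (w1 (i,m)) = sact n s2 (w2 (i,m))" using assms(5) by (metis comp_apply)
      hence "s1 (fst (w1 (i,m))) = s2 (fst (w2 (i,m)))" using x1 x2 by (simp add: sact_def)
      thus ?thesis using f1 f2 by simp
    next
      case False thus ?thesis using assms(3,4) permutes_not_in by metis
    qed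
  qed
  moreover have "w1 = w2"
  proof
    fix p
    have "sact n s1 (w1 p) = sact n s1 (w2 p)" using assms(5) \<open>s1 = s2\<close> by (metis comp_apply)
    thus "w1 p = w2 p" using sact_inj[OF assms(3)] by (simp add: inj_eq)
  qed
  ultimately show ?thesis by simp
qed

lemma HSn_decomp:
  assumes "g \<in> HSn n"
  shows "sigma_of n g permutes {1..n}" "omega_of n g \<in> Hn n"
    "g = sact n (sigma_of n g) \<circ> omega_of n g"
proof -
  obtain w s where ws: "w \<in> Hn n" "s permutes {1..n}" "g = sact n s \<circ> w"
    using assms unfolding HSn_def by blast
  have "sigma_of n g = s" unfolding sigma_of_def
    apply (rule the_equality)
    using ws apply blast
    using ws decomp_unique by metis
  moreover have "omega_of n g = w" unfolding omega_of_def
    apply (rule the_equality)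
    using ws apply blast
    using ws decomp_unique by metis
  ultimately show "sigma_of n g permutes {1..n}" "omega_of n g \<in> Hn n"
    "g = sact n (sigma_of n g) \<circ> omega_of n g" using ws by auto
qed

lemma HSn_eventual:
  assumes "g \<in> HSn n" "k \<in> {1..n}"
  shows "\<exists>z. \<forall>m\<ge>z. fst (g (k,m)) = sigma_of n g k \<and> int (snd (g (k,m))) = int m + tHS n k g"
proof -
  note d = HSn_decomp[OF assms(1)]
  obtain z where z: "z \<ge> 1" "\<forall>m\<ge>z. fst (omega_of n g (k,m)) = k \<and>
      int (snd (omega_of n g (k,m))) = int m + tH k (omega_of n g)"
    using tH_prop[OF d(2) assms(2)] by blast
  have "\<forall>m\<ge>z. fst (g (k,m)) = sigma_of n g k \<and> int (snd (g (k,m))) = int m + tHS n k g"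
  proof (intro allI impI)
    fix m assume m: "m \<ge> z"
    have p: "(k,m) \<in> Xn n" using assms(2) z m by (auto simp: Xn_def)
    have x: "omega_of n g (k,m) \<in> Xn n" using Hn_maps[OF d(2) p] .
    have "g (k,m) = sact n (sigma_of n g) (omega_of n g (k,m))" using d(3) by (metis comp_apply)
    thus "fst (g (k,m)) = sigma_of n g k \<and> int (snd (g (k,m))) = int m + tHS n k g"
      using x z m by (simp add: sact_def tHS_def)
  qed
  thus ?thesis by blast
qed

lemma inv_eventual:
  assumes "x \<in> Hn n" "k \<in> {1..n}"
  shows "\<exists>z. \<forall>m\<ge>z. inv x (k,m) = (k, nat (int m - tH k x))"
proof -
  obtain z where z: "z \<ge> 1" "\<forall>m\<ge>z. fst (x (k,m)) = k \<and> int (snd (x (k,m))) = int m + tH k x"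
    using tH_prop[OF assms] by blast
  have "\<forall>m\<ge>z + nat \<bar>tH k x\<bar>. inv x (k,m) = (k, nat (int m - tH k x))"
  proof (intro allI impI)
    fix m assume m: "m \<ge> z + nat \<bar>tH k x\<bar>"
    define m0 where "m0 = nat (int m - tH k x)"
    have "m0 \<ge> z" using m unfolding m0_def by linarith
    hence "fst (x (k,m0)) = k \<and> int (snd (x (k,m0))) = int m0 + tH k x" using z by blast
    moreover have "int m0 = int m - tH k x" using m z unfolding m0_def by linarith
    ultimately have "x (k,m0) = (k,m)" by (simp add: prod_eq_iff)
    hence "inv x (k,m) = (k,m0)" using Hn_inj[OF assms(1)] by (metis inv_f_f)
    thus "inv x (k,m) = (k, nat (int m - tH k x))" by (simp add: m0_def)
  qed
  thus ?thesis by blast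
qed

lemma key:
  assumes "a \<in> HSn n" "b \<in> HSn n" "sigma_of n a = sigma_of n b" "x \<in> Hn n"
    "x \<circ> a \<circ> inv x = b" "k \<in> {1..n}"
  shows "tHS n k b = tHS n k a - tH k x + tH (sigma_of n a k) x"
proof -
  let ?s = "sigma_of n a"
  have sk: "?s k \<in> {1..n}" using permutes_in_image[OF HSn_decomp(1)[OF assms(1)]] assms(6) by presburger
  obtain zb where zb: "\<forall>m\<ge>zb. fst (b (k,m)) = ?s k \<and> int (snd (b (k,m))) = int m + tHS n k b"
    using HSn_eventual[OF assms(2,6)] assms(3) by auto
  obtain za where za: "\<forall>m\<ge>za. fst (a (k,m)) = ?s k \<and> int (snd (a (k,m))) = int m + tHS n k a"
    using HSn_eventual[OF assms(1,6)] by auto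
  obtain zi where zi: "\<forall>m\<ge>zi. inv x (k,m) = (k, nat (int m - tH k x))"
    using inv_eventual[OF assms(4,6)] by blast
  obtain zx where zx: "zx \<ge> 1" "\<forall>m\<ge>zx. fst (x (?s k,m)) = ?s k \<and>
      int (snd (x (?s k,m))) = int m + tH (?s k) x"
    using tH_prop[OF assms(4) sk] by blast
  define M where "M = zb + za + zi + zx + nat \<bar>tH k x\<bar> + nat \<bar>tHS n k a\<bar>"
  define m1 where "m1 = nat (int M - tH k x)"
  have i1: "inv x (k,M) = (k,m1)" using zi unfolding m1_def M_def by auto
  have "m1 \<ge> za" unfolding m1_def M_def by linarith
  hence a1: "fst (a (k,m1)) = ?s k" "int (snd (a (k,m1))) = int m1 + tHS n k a" using za by auto
  have im1: "int m1 = int M - tH k x" unfolding m1_def M_def by linarith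
  define m2 where "m2 = snd (a (k,m1))"
  have am: "a (k,m1) = (?s k, m2)" using a1 by (simp add: m2_def prod_eq_iff)
  have "m2 \<ge> zx" using a1(2) im1 unfolding m2_def M_def by linarith
  hence x2: "int (snd (x (?s k,m2))) = int m2 + tH (?s k) x" using zx by auto
  have "b (k,M) = x (?s k, m2)" using assms(5) i1 am by (metis comp_apply)
  moreover have "int (snd (b (k,M))) = int M + tHS n k b" using zb unfolding M_def by auto
  ultimately have "int M + tHS n k b = int m2 + tH (?s k) x" using x2 by simp
  thus ?thesis using a1(2) im1 unfolding m2_def by linarith
qed

lemma funpow_in:
  assumes "s permutes S" "i \<in> S" shows "(s ^^ k) i \<in> S"
  using assms by (induction k) (auto simp: permutes_in_image)

theorem lemma3p9:
  fixes n :: nat and a b x :: "nat \<times> nat \<Rightarrow> nat \<times> nat"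
  assumes "n \<ge> 2"
    and "a \<in> HSn n" and "b \<in> HSn n"
    and "sigma_of n a = sigma_of n b"
    and "x \<in> Hn n"
    and "x \<circ> a \<circ> inv x = b"
  shows "\<forall>i\<in>{1..n}. tcls n a i = tcls n b i"
proof
  fix i assume i: "i \<in> {1..n}"
  let ?s = "sigma_of n a"
  let ?C = "cls n a i"
  have perm: "?s permutes {1..n}" using HSn_decomp(1)[OF assms(2)] .
  have Cb: "cls n b i = ?C" unfolding cls_def using assms(4) by simp
  have sub: "?C \<subseteq> {1..n}" unfolding cls_def using funpow_in[OF perm i] by blast
  have fin: "finite ?C" using sub finite_subset by blast
  have img: "?s ` ?C \<subseteq> ?C"
  proof
    fix y assume "y \<in> ?s ` ?C"
    then obtain k where "y = ?s ((?s ^^ k) i)" unfolding cls_def by blast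
    hence "y = (?s ^^ Suc k) i" by simp
    thus "y \<in> ?C" unfolding cls_def by blast
  qed
  have inj: "inj_on ?s ?C" using permutes_inj[OF perm] inj_on_subset by blast
  have eq: "?s ` ?C = ?C" using endo_inj_surj[OF fin img inj] .
  have "tcls n b i = (\<Sum>k\<in>?C. tHS n k a - tH k x + tH (?s k) x)"
    unfolding tcls_def Cb
    by (rule sum.cong) (use sub key[OF assms(2,3,4,5,6)] in auto)
  also have "\<dots> = tcls n a i - (\<Sum>k\<in>?C. tH k x) + (\<Sum>k\<in>?C. tH (?s k) x)"
    unfolding tcls_def by (simp add: sum.distrib sum_subtractf)
  also have "(\<Sum>k\<in>?C. tH (?s k) x) = (\<Sum>k\<in>?s ` ?C. tH k x)"
    using sum.reindex[OF inj, of "\<lambda>k. tH k x"] by (simp add: comp_def)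
  also have "\<dots> = (\<Sum>k\<in>?C. tH k x)" using eq by simp
  finally show "tcls n a i = tcls n b i" by simp
qed

end
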